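(* Let $\Gamma$ be a finite, connected, labelled simplicial graph on at least three vertices, and let $H,V$ be two standard big chunk parabolic subgroups of $A_\Gamma$. If $H\le kVk^{-1}$ for some $k\in A_\Gamma$, then $H=V$ and $k\in H$.
   Context: Labels $m_{ab}\in\mathbb{Z}_{\ge2}$ on edges; $A_\Gamma=\langle V(\Gamma)\mid \mathrm{prod}(a,b,m_{ab})=\mathrm{prod}(b,a,m_{ab})\ \forall\{a,b\}\in E(\Gamma)\rangle$, with $\mathrm{prod}(u,v,n)$ the prefix of length $n$ of $uvuv\cdots$. For a full subgraph $\Lambda$, $A_\Lambda=\langle V(\Lambda)\rangle\le A_\Gamma$ (standard parabolic subgroup). A big chunk of $\Gamma$ is a connected induced subgraph with no separating vertex (a vertex whose removal disconnects it), maximal with respect to inclusion among such subgraphs. A standard big chunk parabolic is $A_\Lambda$ for a big chunk $\Lambda$. *)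

theory Defs
  imports Main
begin

text \<open>Words in the generators: a letter (a, True) is a, (a, False) is a^{-1}.\<close>

type_synonym 'v letter = "'v \<times> bool"
type_synonym 'v word = "'v letter list"

definition labelled_simplicial_graph :: "'v set \<Rightarrow> ('v \<Rightarrow> 'v \<Rightarrow> bool) \<Rightarrow> ('v \<Rightarrow> 'v \<Rightarrow> nat) \<Rightarrow> bool" where
  "labelled_simplicial_graph VV E m \<longleftrightarrow>
     (\<forall>a b. E a b \<longrightarrow> a \<in> VV \<and> b \<in> VV) \<and>
     (\<forall>a. \<not> E a a) \<and>
     (\<forall>a b. E a b \<longrightarrow> E b a) \<and>
     (\<forall>a b. E a b \<longrightarrow> m a b = m b a \<and> 2 \<le> m a b)"

definition flip :: "'v letter \<Rightarrow> 'v letter" where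
  "flip x = (fst x, \<not> snd x)"

definition winv :: "'v word \<Rightarrow> 'v word" where
  "winv w = rev (map flip w)"

definition alt_prod :: "'v \<Rightarrow> 'v \<Rightarrow> nat \<Rightarrow> 'v word" where
  "alt_prod a b n = map (\<lambda>i. if even i then (a, True) else (b, True)) [0..<n]"

text \<open>The congruence on words over VV defining the Artin group A_Gamma:
  generated by free reduction and the Artin relations, closed under contexts.\<close>
inductive artin_eq :: "'v set \<Rightarrow> ('v \<Rightarrow> 'v \<Rightarrow> bool) \<Rightarrow> ('v \<Rightarrow> 'v \<Rightarrow> nat) \<Rightarrow> 'v word \<Rightarrow> 'v word \<Rightarrow> bool"
  for VV E m where
  refl: "set w \<subseteq> VV \<times> UNIV \<Longrightarrow> artin_eq VV E m w w"
| sym: "artin_eq VV E m u w \<Longrightarrow> artin_eq VV E m w u"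
| trans: "artin_eq VV E m u v \<Longrightarrow> artin_eq VV E m v w \<Longrightarrow> artin_eq VV E m u w"
| red: "set u \<subseteq> VV \<times> UNIV \<Longrightarrow> set w \<subseteq> VV \<times> UNIV \<Longrightarrow> fst x \<in> VV \<Longrightarrow>
        artin_eq VV E m (u @ [x, flip x] @ w) (u @ w)"
| braid: "set u \<subseteq> VV \<times> UNIV \<Longrightarrow> set w \<subseteq> VV \<times> UNIV \<Longrightarrow> a \<in> VV \<Longrightarrow> b \<in> VV \<Longrightarrow> E a b \<Longrightarrow>
        artin_eq VV E m (u @ alt_prod a b (m a b) @ w) (u @ alt_prod b a (m a b) @ w)"

definition artin_elem :: "'v set \<Rightarrow> ('v \<Rightarrow> 'v \<Rightarrow> bool) \<Rightarrow> ('v \<Rightarrow> 'v \<Rightarrow> nat) \<Rightarrow> 'v word \<Rightarrow> 'v word set" where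
  "artin_elem VV E m w = {w'. artin_eq VV E m w w'}"

definition std_parabolic :: "'v set \<Rightarrow> ('v \<Rightarrow> 'v \<Rightarrow> bool) \<Rightarrow> ('v \<Rightarrow> 'v \<Rightarrow> nat) \<Rightarrow> 'v set \<Rightarrow> 'v word set set" where
  "std_parabolic VV E m L = {artin_elem VV E m w | w. set w \<subseteq> L \<times> UNIV}"

definition conj_parabolic :: "'v set \<Rightarrow> ('v \<Rightarrow> 'v \<Rightarrow> bool) \<Rightarrow> ('v \<Rightarrow> 'v \<Rightarrow> nat) \<Rightarrow> 'v word \<Rightarrow> 'v set \<Rightarrow> 'v word set set" where
  "conj_parabolic VV E m k L = {artin_elem VV E m (k @ w @ winv k) | w. set w \<subseteq> L \<times> UNIV}"

definition connected_on :: "('v \<Rightarrow> 'v \<Rightarrow> bool) \<Rightarrow> 'v set \<Rightarrow> bool" where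
  "connected_on E S \<longleftrightarrow> S \<noteq> {} \<and>
     (\<forall>x\<in>S. \<forall>y\<in>S. (x, y) \<in> {(a, b). a \<in> S \<and> b \<in> S \<and> E a b}\<^sup>*)"

definition separating_vertex :: "('v \<Rightarrow> 'v \<Rightarrow> bool) \<Rightarrow> 'v set \<Rightarrow> 'v \<Rightarrow> bool" where
  "separating_vertex E S v \<longleftrightarrow> v \<in> S \<and> \<not> connected_on E (S - {v})"

definition chunk :: "'v set \<Rightarrow> ('v \<Rightarrow> 'v \<Rightarrow> bool) \<Rightarrow> 'v set \<Rightarrow> bool" where
  "chunk VV E S \<longleftrightarrow> S \<subseteq> VV \<and> connected_on E S \<and> (\<forall>v\<in>S. \<not> separating_vertex E S v)"

definition big_chunk :: "'v set \<Rightarrow> ('v \<Rightarrow> 'v \<Rightarrow> bool) \<Rightarrow> 'v set \<Rightarrow> bool" where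
  "big_chunk VV E S \<longleftrightarrow> chunk VV E S \<and> (\<forall>T. chunk VV E T \<and> S \<subseteq> T \<longrightarrow> T = S)"

end

theory Submission
  imports Defs Complex_Main
begin


lemma flip_flip[simp]: "flip (flip x) = x" by (simp add: flip_def)
lemma fst_flip[simp]: "fst (flip x) = fst x" by (simp add: flip_def)
lemma winv_append[simp]: "winv (u @ w) = winv w @ winv u" by (simp add: winv_def)
lemma winv_winv[simp]: "winv (winv w) = w" by (simp add: winv_def rev_map comp_def)
lemma winv_Nil[simp]: "winv [] = []" by (simp add: winv_def)
lemma winv_Cons[simp]: "winv (x # w) = winv w @ [flip x]" by (simp add: winv_def)
lemma set_winv: "set (winv w) \<subseteq> A \<times> UNIV \<longleftrightarrow> set w \<subseteq> A \<times> UNIV"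
  by (auto simp: winv_def flip_def)

lemma ae_wf: "artin_eq VV E m u w \<Longrightarrow> set u \<subseteq> VV \<times> UNIV \<and> set w \<subseteq> VV \<times> UNIV"
  by (induction rule: artin_eq.induct) (auto simp: alt_prod_def flip_def)

lemma ae_ctx: "artin_eq VV E m a b \<Longrightarrow> set u \<subseteq> VV \<times> UNIV \<Longrightarrow> set w \<subseteq> VV \<times> UNIV
  \<Longrightarrow> artin_eq VV E m (u @ a @ w) (u @ b @ w)"
proof (induction rule: artin_eq.induct)
  case (refl w') then show ?case by (intro artin_eq.refl) auto
next
  case (sym u' w') then show ?case by (blast intro: artin_eq.sym)
next
  case (trans u' v' w') then show ?case by (blast intro: artin_eq.trans)
next
  case (red u' w' x)
  have "artin_eq VV E m ((u @ u') @ [x, flip x] @ (w' @ w)) ((u @ u') @ (w' @ w))"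
    using red by (intro artin_eq.red) auto
  then show ?case by simp
next
  case (braid u' w' a b)
  have "artin_eq VV E m ((u @ u') @ alt_prod a b (m a b) @ (w' @ w)) ((u @ u') @ alt_prod b a (m a b) @ (w' @ w))"
    using braid by (intro artin_eq.braid) auto
  then show ?case by simp
qed

lemma ae_refl: "set w \<subseteq> VV \<times> UNIV \<Longrightarrow> artin_eq VV E m w w" by (rule artin_eq.refl)
lemma ae_sym: "artin_eq VV E m u w \<Longrightarrow> artin_eq VV E m w u" by (rule artin_eq.sym)
lemma ae_trans: "artin_eq VV E m u v \<Longrightarrow> artin_eq VV E m v w \<Longrightarrow> artin_eq VV E m u w" by (rule artin_eq.trans)

lemma ae_app: "artin_eq VV E m a b \<Longrightarrow> artin_eq VV E m c d \<Longrightarrow> artin_eq VV E m (a @ c) (b @ d)"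
proof -
  assume 1: "artin_eq VV E m a b" and 2: "artin_eq VV E m c d"
  have "artin_eq VV E m ([] @ a @ c) ([] @ b @ c)" using 1 2 ae_wf[OF 2] by (intro ae_ctx) auto
  moreover have "artin_eq VV E m (b @ c @ []) (b @ d @ [])" using 1 2 ae_wf[OF 1] by (intro ae_ctx) auto
  ultimately show ?thesis by (auto intro: ae_trans)
qed

lemma ae_app_l: "artin_eq VV E m a b \<Longrightarrow> set u \<subseteq> VV \<times> UNIV \<Longrightarrow> artin_eq VV E m (u @ a) (u @ b)"
  using ae_app ae_refl by blast
lemma ae_app_r: "artin_eq VV E m a b \<Longrightarrow> set u \<subseteq> VV \<times> UNIV \<Longrightarrow> artin_eq VV E m (a @ u) (b @ u)"
  using ae_app ae_refl by blast

lemma ae_red1: "fst x \<in> VV \<Longrightarrow> artin_eq VV E m [x, flip x] []"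
  using artin_eq.red[of "[]" VV "[]" x E m] by simp

lemma ae_inv_r: "set w \<subseteq> VV \<times> UNIV \<Longrightarrow> artin_eq VV E m (w @ winv w) []"
proof (induction w)
  case Nil then show ?case by (simp add: ae_refl)
next
  case (Cons x w)
  have "artin_eq VV E m ([x] @ (w @ winv w) @ [flip x]) ([x] @ [] @ [flip x])"
    using Cons by (intro ae_ctx) (auto simp: flip_def)
  moreover have "artin_eq VV E m [x, flip x] []" using Cons by (intro ae_red1) auto
  ultimately show ?case by (auto intro: ae_trans)
qed

lemma ae_inv_l: "set w \<subseteq> VV \<times> UNIV \<Longrightarrow> artin_eq VV E m (winv w @ w) []"
  using ae_inv_r[of "winv w" VV E m] by (simp add: set_winv)

lemma ae_cancel_l: "artin_eq VV E m (u @ x) (u @ y) \<Longrightarrow> artin_eq VV E m x y"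
proof -
  assume h: "artin_eq VV E m (u @ x) (u @ y)"
  have wu: "set u \<subseteq> VV \<times> UNIV" and wx: "set x \<subseteq> VV \<times> UNIV" and wy: "set y \<subseteq> VV \<times> UNIV" using ae_wf[OF h] by auto
  have "artin_eq VV E m (winv u @ (u @ x)) (winv u @ (u @ y))" using ae_app_l[OF h, of "winv u"] wu by (simp add: set_winv)
  moreover have "artin_eq VV E m (winv u @ (u @ x)) x"
    using ae_app_r[OF ae_inv_l[OF wu] wx] by simp
  moreover have "artin_eq VV E m (winv u @ (u @ y)) y"
    using ae_app_r[OF ae_inv_l[OF wu] wy] by simp
  ultimately show ?thesis by (meson ae_sym ae_trans)
qed

lemma ae_cancel_r: "artin_eq VV E m (x @ u) (y @ u) \<Longrightarrow> artin_eq VV E m x y"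
proof -
  assume h: "artin_eq VV E m (x @ u) (y @ u)"
  have wu: "set u \<subseteq> VV \<times> UNIV" and wx: "set x \<subseteq> VV \<times> UNIV" and wy: "set y \<subseteq> VV \<times> UNIV" using ae_wf[OF h] by auto
  have "artin_eq VV E m ((x @ u) @ winv u) ((y @ u) @ winv u)" using ae_app_r[OF h, of "winv u"] wu by (simp add: set_winv)
  moreover have "artin_eq VV E m ((x @ u) @ winv u) x"
    using ae_app_l[OF ae_inv_r[OF wu] wx] by simp
  moreover have "artin_eq VV E m ((y @ u) @ winv u) y"
    using ae_app_l[OF ae_inv_r[OF wu] wy] by simp
  ultimately show ?thesis by (meson ae_sym ae_trans)
qed

lemma ae_winv: "artin_eq VV E m a b \<Longrightarrow> artin_eq VV E m (winv a) (winv b)"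
proof -
  assume h: "artin_eq VV E m a b"
  from ae_wf[OF h] have wa: "set a \<subseteq> VV \<times> UNIV" and wb: "set b \<subseteq> VV \<times> UNIV" by auto
  have "artin_eq VV E m (winv a @ a) (winv b @ b)"
    using ae_inv_l[OF wa] ae_inv_l[OF wb] by (meson ae_sym ae_trans)
  then have "artin_eq VV E m (winv a @ b) (winv b @ b)"
    using h by (meson ae_app_l ae_sym ae_trans set_winv wa)
  then show ?thesis by (rule ae_cancel_r)
qed

lemma ae_mono: "artin_eq VV E m u w \<Longrightarrow> VV \<subseteq> VV' \<Longrightarrow> (\<forall>a b. a \<in> VV \<longrightarrow> b \<in> VV \<longrightarrow> E a b \<longrightarrow> E' a b)
  \<Longrightarrow> artin_eq VV' E' m u w"
proof (induction rule: artin_eq.induct)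
  case (refl w) then show ?case by (intro artin_eq.refl) auto
next
  case (sym u w) then show ?case by (blast intro: artin_eq.sym)
next
  case (trans u v w) then show ?case by (blast intro: artin_eq.trans)
next
  case (red u w x) then show ?case by (intro artin_eq.red) auto
next
  case (braid u w a b) then show ?case by (intro artin_eq.braid) auto
qed

definition es :: "'v word \<Rightarrow> int" where
  "es w = sum_list (map (\<lambda>x. if snd x then 1 else -1) w)"

lemma es_append[simp]: "es (u @ w) = es u + es w" by (simp add: es_def)
lemma es_Cons[simp]: "es (x # w) = (if snd x then 1 else -1) + es w" by (simp add: es_def)
lemma es_Nil[simp]: "es [] = 0" by (simp add: es_def)
lemma es_winv[simp]: "es (winv w) = - es w" by (induction w) (auto simp: flip_def)
lemma es_alt: "es (alt_prod a b n) = int n"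
  by (induction n) (auto simp: es_def alt_prod_def)

lemma ae_es: "artin_eq VV E m u w \<Longrightarrow> es u = es w"
  by (induction rule: artin_eq.induct) (auto simp: es_alt flip_def)



definition Bm :: "('v \<Rightarrow> 'v \<Rightarrow> bool) \<Rightarrow> ('v \<Rightarrow> 'v \<Rightarrow> nat) \<Rightarrow> 'v \<Rightarrow> 'v \<Rightarrow> real" where
  "Bm E m a b = (if a = b then 1 else if E a b then - cos (pi / real (m a b)) else 0)"

definition tau :: "('v \<Rightarrow> 'v \<Rightarrow> bool) \<Rightarrow> ('v \<Rightarrow> 'v \<Rightarrow> nat) \<Rightarrow> 'v \<Rightarrow> ('v \<Rightarrow> real) \<Rightarrow> ('v \<Rightarrow> real)" where
  "tau E m c f = (\<lambda>d. f d - 2 * Bm E m c d * f c)"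

definition tauw :: "('v \<Rightarrow> 'v \<Rightarrow> bool) \<Rightarrow> ('v \<Rightarrow> 'v \<Rightarrow> nat) \<Rightarrow> 'v word \<Rightarrow> ('v \<Rightarrow> real) \<Rightarrow> ('v \<Rightarrow> real)" where
  "tauw E m w f = foldr (\<lambda>x. tau E m (fst x)) w f"

lemma tauw_append: "tauw E m (u @ w) f = tauw E m u (tauw E m w f)"
  by (simp add: tauw_def)
lemma tauw_Cons: "tauw E m (x # w) f = tau E m (fst x) (tauw E m w f)"
  by (simp add: tauw_def)
lemma tauw_Nil: "tauw E m [] f = f" by (simp add: tauw_def)

lemma tau_tau: "tau E m c (tau E m c f) = f"
  by (rule ext) (simp add: tau_def Bm_def)

lemma alt_Suc: "alt_prod a b (Suc n) = (a, True) # alt_prod b a n"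
  unfolding alt_prod_def by (simp add: upt_conv_Cons map_Suc_upt[symmetric] del: upt_Suc)

lemma tau_lin:
  assumes "fst ` set w \<subseteq> {s, t}"
  shows "\<exists>Ls Lt. \<forall>d. tauw E m w f d = f d - 2 * Bm E m s d * Ls - 2 * Bm E m t d * Lt"
  using assms
proof (induction w)
  case Nil
  have "\<forall>d. tauw E m [] f d = f d - 2 * Bm E m s d * 0 - 2 * Bm E m t d * 0" by (simp add: tauw_Nil)
  then show ?case by blast
next
  case (Cons x w)
  then obtain Ls Lt where h: "\<forall>d. tauw E m w f d = f d - 2 * Bm E m s d * Ls - 2 * Bm E m t d * Lt" by auto
  define g where "g = tauw E m w f"
  have hg: "\<And>d. g d = f d - 2 * Bm E m s d * Ls - 2 * Bm E m t d * Lt" using h g_def by auto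
  have tc: "tauw E m (x # w) f = tau E m (fst x) g" by (simp add: tauw_Cons g_def)
  have "fst x = s \<or> fst x = t" using Cons by auto
  then show ?case
  proof
    assume xs: "fst x = s"
    have "\<forall>d. tauw E m (x # w) f d = f d - 2 * Bm E m s d * (Ls + g s) - 2 * Bm E m t d * Lt"
    proof
      fix d
      have "tauw E m (x # w) f d = g d - 2 * Bm E m s d * g s" by (simp add: tc xs tau_def)
      also have "\<dots> = f d - 2 * Bm E m s d * (Ls + g s) - 2 * Bm E m t d * Lt"
        unfolding hg[of d] by (simp add: algebra_simps)
      finally show "tauw E m (x # w) f d = f d - 2 * Bm E m s d * (Ls + g s) - 2 * Bm E m t d * Lt" .
    qed
    then show ?case by blast
  next
    assume xt: "fst x = t"
    have "\<forall>d. tauw E m (x # w) f d = f d - 2 * Bm E m s d * Ls - 2 * Bm E m t d * (Lt + g t)"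
    proof
      fix d
      have "tauw E m (x # w) f d = g d - 2 * Bm E m t d * g t" by (simp add: tc xt tau_def)
      also have "\<dots> = f d - 2 * Bm E m s d * Ls - 2 * Bm E m t d * (Lt + g t)"
        unfolding hg[of d] by (simp add: algebra_simps)
      finally show "tauw E m (x # w) f d = f d - 2 * Bm E m s d * Ls - 2 * Bm E m t d * (Lt + g t)" .
    qed
    then show ?case by blast
  qed
qed

lemma set_alt: "fst ` set (alt_prod a b n) \<subseteq> {a, b}"
  by (auto simp: alt_prod_def)

lemma trig1: "- sin ((p::real) + q) + 2 * cos q * sin p = sin (p - q)"
  by (simp add: sin_add sin_diff algebra_simps)
lemma trig2: "sin (p::real) - 2 * cos q * sin (p + q) = - sin (p + 2 * q)"
proof -
  have "sin (p + 2*q) = sin ((p + q) + q)" by (simp add: algebra_simps)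
  also have "\<dots> = sin (p+q) * cos q + cos (p+q) * sin q" by (rule sin_add)
  finally have a: "sin (p + 2*q) = sin (p+q) * cos q + cos (p+q) * sin q" .
  have b: "sin p = sin ((p + q) - q)" by simp
  show ?thesis unfolding a b sin_diff by (simp add: algebra_simps)
qed

context
  fixes E :: "'v \<Rightarrow> 'v \<Rightarrow> bool" and m :: "'v \<Rightarrow> 'v \<Rightarrow> nat" and s t :: 'v and th :: real
  assumes st: "s \<noteq> t" and Est: "E s t" "E t s" and mst: "m s t = m t s" and m2: "2 \<le> m s t"
  and thd: "th = pi / real (m s t)"
begin

definition PP :: "real \<Rightarrow> real \<Rightarrow> ('v \<Rightarrow> real) \<Rightarrow> bool" where
  "PP r p f \<longleftrightarrow> f s = r * sin p \<and> f t = - r * sin (p + th)"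

lemma Bst: "Bm E m s t = - cos th" "Bm E m t s = - cos th"
  using st Est mst thd by (auto simp: Bm_def)

lemma Bss: "Bm E m s s = 1" "Bm E m t t = 1" by (auto simp: Bm_def)

lemma PP_s: assumes "PP r p g" shows "PP r (-p) (tau E m s g)"
proof -
  have gs: "g s = r * sin p" and gt: "g t = - r * sin (p + th)" using assms by (auto simp: PP_def)
  have 1: "tau E m s g s = - g s" by (simp add: tau_def Bss)
  have 2: "tau E m s g t = g t + 2 * cos th * g s" by (simp add: tau_def Bst)
  have 3: "- sin (p + th) + 2 * cos th * sin p = - sin (- p + th)"
    using trig1[of p th] by (simp add: sin_diff sin_add)
  have "tau E m s g t = r * (- sin (p + th) + 2 * cos th * sin p)" unfolding 2 gs gt by (simp add: algebra_simps)
  also have "\<dots> = - r * sin (- p + th)" unfolding 3 by simp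
  finally show ?thesis unfolding PP_def 1 gs by simp
qed

lemma PP_t: assumes "PP r p g" shows "PP r (- 2 * th - p) (tau E m t g)"
proof -
  have gs: "g s = r * sin p" and gt: "g t = - r * sin (p + th)" using assms by (auto simp: PP_def)
  have 1: "tau E m t g t = - g t" by (simp add: tau_def Bss)
  have 2: "tau E m t g s = g s + 2 * cos th * g t" by (simp add: tau_def Bst)
  have "tau E m t g s = r * (sin p - 2 * cos th * sin (p + th))" unfolding 2 gs gt by (simp add: algebra_simps)
  also have "\<dots> = r * sin (- 2 * th - p)"
  proof -
    have e3: "- 2 * th - p = - (p + 2 * th)" by simp
    show ?thesis unfolding e3 sin_minus trig2 by simp
  qed
  finally have a: "tau E m t g s = r * sin (- 2 * th - p)" .
  have e: "- 2 * th - p + th = - (p + th)" by simp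
  have b: "tau E m t g t = - r * sin (- 2 * th - p + th)"
    unfolding 1 gt e sin_minus by simp
  show ?thesis unfolding PP_def using a b by simp
qed

lemma PP_cong: "p = q \<Longrightarrow> PP r p g \<Longrightarrow> PP r q g" by simp

lemma PP_iter: assumes "PP r p f"
  shows "\<exists>q. PP r (q + 2 * real n * th) (tauw E m (alt_prod s t n) f) \<and> PP r q (tauw E m (alt_prod t s n) f)"
proof (induction n)
  case 0 then show ?case using assms by (auto simp: alt_prod_def tauw_Nil)
next
  case (Suc n)
  then obtain q where h1: "PP r (q + 2 * real n * th) (tauw E m (alt_prod s t n) f)"
    and h2: "PP r q (tauw E m (alt_prod t s n) f)" by auto
  have a: "PP r (- q) (tauw E m (alt_prod s t (Suc n)) f)"
    using PP_s[OF h2] by (simp add: alt_Suc tauw_Cons)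
  have b: "PP r (- 2 * th - (q + 2 * real n * th)) (tauw E m (alt_prod t s (Suc n)) f)"
    using PP_t[OF h1] by (simp add: alt_Suc tauw_Cons)
  let ?q = "- 2 * th - (q + 2 * real n * th)"
  have "PP r (?q + 2 * real (Suc n) * th) (tauw E m (alt_prod s t (Suc n)) f)"
    by (rule PP_cong[OF _ a]) (simp add: algebra_simps)
  then show ?case using b by blast
qed

lemma th_pos: "0 < th" "th < pi" "th * real (m s t) = pi"
proof -
  have mpos: "real (m s t) \<ge> 2" using m2 by simp
  show "0 < th" unfolding thd using mpos by simp
  show "th < pi" unfolding thd using mpos pi_gt_zero by (simp add: divide_less_eq)
  show "th * real (m s t) = pi" unfolding thd using mpos by simp
qed

lemma sin_th: "sin th > 0" using th_pos by (intro sin_gt_zero) auto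

lemma braid_pair: "tauw E m (alt_prod s t (m s t)) f s = tauw E m (alt_prod t s (m s t)) f s \<and>
   tauw E m (alt_prod s t (m s t)) f t = tauw E m (alt_prod t s (m s t)) f t"
proof -
  obtain r a where ra: "- (f t + f s * cos th) / sin th = r * cos a" "f s = r * sin a" using polar_Ex by blast
  have "PP r a f"
  proof -
    have "- r * sin (a + th) = - (r * sin a * cos th + r * cos a * sin th)" by (simp add: sin_add algebra_simps)
    also have "\<dots> = f t" unfolding ra(2) ra(1)[symmetric] using sin_th by (simp add: field_simps)
    finally show ?thesis unfolding PP_def using ra by simp
  qed
  from PP_iter[OF this, of "m s t"] obtain q where
    h1: "PP r (q + 2 * real (m s t) * th) (tauw E m (alt_prod s t (m s t)) f)" and
    h2: "PP r q (tauw E m (alt_prod t s (m s t)) f)" by auto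
  have e: "q + 2 * real (m s t) * th = q + 2 * pi" using th_pos(3) by (simp add: algebra_simps)
  have e2: "q + 2 * pi + th = (q + th) + 2 * pi" by simp
  show ?thesis using h1 h2 unfolding e PP_def e2 sin_periodic by simp
qed

lemma braid_full: "tauw E m (alt_prod s t (m s t)) f = tauw E m (alt_prod t s (m s t)) f"
proof -
  obtain L1 L2 where l1: "\<forall>d. tauw E m (alt_prod s t (m s t)) f d = f d - 2 * Bm E m s d * L1 - 2 * Bm E m t d * L2"
    using tau_lin[of "alt_prod s t (m s t)" s t E m f] set_alt[of s t] by blast
  obtain K1 K2 where l2: "\<forall>d. tauw E m (alt_prod t s (m s t)) f d = f d - 2 * Bm E m s d * K1 - 2 * Bm E m t d * K2"
    using tau_lin[of "alt_prod t s (m s t)" s t] set_alt[of t s] by blast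
  let ?c = "cos th"
  have c1: "?c * ?c < 1"
  proof -
    have "sin th * sin th > 0" using sin_th by simp
    moreover have "sin th * sin th + ?c * ?c = 1" using sin_cos_squared_add[of th] by (simp add: power2_eq_square)
    ultimately show ?thesis by linarith
  qed
  have "f s - 2 * Bm E m s s * L1 - 2 * Bm E m t s * L2 = f s - 2 * Bm E m s s * K1 - 2 * Bm E m t s * K2"
    using conjunct1[OF braid_pair[of f]] by (simp only: l1[rule_format] l2[rule_format])
  then have e1: "L1 - ?c * L2 = K1 - ?c * K2" by (simp add: Bss Bst)
  have "f t - 2 * Bm E m s t * L1 - 2 * Bm E m t t * L2 = f t - 2 * Bm E m s t * K1 - 2 * Bm E m t t * K2"
    using conjunct2[OF braid_pair[of f]] by (simp only: l1[rule_format] l2[rule_format])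
  then have e2: "- ?c * L1 + L2 = - ?c * K1 + K2" by (simp add: Bss Bst)
  have d1: "L1 - K1 = ?c * (L2 - K2)" using e1 by (simp add: algebra_simps)
  have d2: "L2 - K2 = ?c * (L1 - K1)" using e2 by (simp add: algebra_simps)
  have "L2 - K2 = ?c * ?c * (L2 - K2)" using d2 unfolding d1 by (simp add: mult.assoc)
  then have "(1 - ?c * ?c) * (L2 - K2) = 0" by (simp add: algebra_simps)
  then have "L2 = K2" using c1 by simp
  then have "L1 = K1" using e1 by simp
  then show ?thesis using l1 l2 \<open>L2 = K2\<close> by (intro ext) simp
qed

end

lemma tits_inv:
  assumes lsg: "labelled_simplicial_graph VV E m"
  shows "artin_eq VV E m u w \<Longrightarrow> tauw E m u = tauw E m w"
proof (induction rule: artin_eq.induct)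
  case (refl w) then show ?case by simp
next
  case (sym u w) then show ?case by simp
next
  case (trans u v w) then show ?case by simp
next
  case (red u w x)
  show ?case by (rule ext) (simp add: tauw_append tauw_Cons tau_tau tauw_Nil)
next
  case (braid u w a b)
  have "a \<noteq> b" "E b a" "m a b = m b a" "2 \<le> m a b" using braid lsg by (auto simp: labelled_simplicial_graph_def)
  then have "\<And>f. tauw E m (alt_prod a b (m a b)) f = tauw E m (alt_prod b a (m a b)) f"
    using braid_full[of a b E m "pi / real (m a b)"] braid by auto
  then show ?case by (intro ext) (simp add: tauw_append)
qed

lemma gens_distinct:
  assumes "labelled_simplicial_graph VV E m" "a \<noteq> b"
  shows "\<not> artin_eq VV E m [(a, True)] [(b, True)]"
proof
  assume "artin_eq VV E m [(a, True)] [(b, True)]"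
  then have "tauw E m [(a, True)] = tauw E m [(b, True)]" using tits_inv[OF assms(1)] by blast
  then have "tauw E m [(a, True)] (\<lambda>d. if d = a then 1 else 0) a = tauw E m [(b, True)] (\<lambda>d. if d = a then 1 else 0) a" by simp
  then show False using assms(2) by (simp add: tauw_def tau_def Bm_def)
qed



definition Eres :: "('v \<Rightarrow> 'v \<Rightarrow> bool) \<Rightarrow> 'v set \<Rightarrow> 'v \<Rightarrow> 'v \<Rightarrow> bool" where
  "Eres E S a b \<longleftrightarrow> E a b \<and> a \<in> S \<and> b \<in> S"

locale amalg =
  fixes VV :: "'v set" and E :: "'v \<Rightarrow> 'v \<Rightarrow> bool" and m :: "'v \<Rightarrow> 'v \<Rightarrow> nat"
    and X Y :: "'v set" and v :: 'v
  assumes XY: "X \<union> Y = VV" "X \<inter> Y = {v}"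
    and edges: "\<And>a b. E a b \<Longrightarrow> a \<in> VV \<Longrightarrow> b \<in> VV \<Longrightarrow> (a \<in> X \<and> b \<in> X) \<or> (a \<in> Y \<and> b \<in> Y)"
begin

definition side :: "bool \<Rightarrow> 'v set" where "side z = (if z then X else Y)"

abbreviation RS :: "bool \<Rightarrow> 'v word \<Rightarrow> 'v word \<Rightarrow> bool" where
  "RS z \<equiv> artin_eq (side z) (Eres E (side z)) m"

abbreviation R :: "'v word \<Rightarrow> 'v word \<Rightarrow> bool" where
  "R \<equiv> artin_eq VV E m"

abbreviation sw :: "bool \<Rightarrow> 'v word \<Rightarrow> bool" where
  "sw z w \<equiv> set w \<subseteq> side z \<times> UNIV"

lemma v_side: "v \<in> side z" using XY by (auto simp: side_def)
lemma side_sub: "side z \<subseteq> VV" using XY by (auto simp: side_def)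

lemma RS_R: "RS z u w \<Longrightarrow> R u w"
  by (erule ae_mono) (auto simp: Eres_def side_sub[THEN subsetD] side_sub)

lemma sw_VV: "sw z w \<Longrightarrow> set w \<subseteq> VV \<times> UNIV" using side_sub by blast

definition vpow :: "int \<Rightarrow> 'v word" where
  "vpow n = (if 0 \<le> n then replicate (nat n) (v, True) else replicate (nat (- n)) (v, False))"

lemma sw_vpow: "sw z (vpow n)" using v_side by (auto simp: vpow_def)
lemma vpow_0[simp]: "vpow 0 = []" by (simp add: vpow_def)
lemma es_vpow: "es (vpow n) = n"
proof -
  have "es (replicate k (v, b)) = (if b then int k else - int k)" for k b
    by (induction k) auto
  then show ?thesis by (auto simp: vpow_def)
qed

lemma winv_replicate: "winv (replicate k x) = replicate k (flip x)"
  by (simp add: winv_def)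

lemma winv_vpow: "winv (vpow n) = vpow (- n)"
  by (auto simp: vpow_def winv_replicate flip_def)

lemma vpow_succ: "RS z (vpow (n + 1)) ((v, True) # vpow n)"
proof (cases "0 \<le> n")
  case True
  then have "vpow (n + 1) = (v, True) # vpow n" by (simp add: vpow_def nat_add_distrib)
  then show ?thesis using sw_vpow[where z=z and n="n+1"] by (simp add: ae_refl)
next
  case False
  then obtain k where k: "nat (- n) = Suc k" by (cases "nat (-n)") auto
  have a: "vpow n = (v, False) # replicate k (v, False)" using False k by (simp add: vpow_def)
  have b: "vpow (n + 1) = replicate k (v, False)" using False k by (auto simp: vpow_def)
  have "RS z ([] @ [(v, True), flip (v, True)] @ replicate k (v, False)) ([] @ replicate k (v, False))"
    using v_side by (intro artin_eq.red) auto
  then show ?thesis unfolding a b by (simp add: flip_def ae_sym)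
qed

lemma vpow_pred: "RS z (vpow (n - 1)) ((v, False) # vpow n)"
proof (cases "0 < n")
  case True
  then obtain k where k: "nat n = Suc k" by (cases "nat n") auto
  have a: "vpow n = (v, True) # replicate k (v, True)" using True k by (simp add: vpow_def)
  have b: "vpow (n - 1) = replicate k (v, True)" using True k by (auto simp: vpow_def)
  have "RS z ([] @ [(v, False), flip (v, False)] @ replicate k (v, True)) ([] @ replicate k (v, True))"
    using v_side by (intro artin_eq.red) auto
  then show ?thesis unfolding a b by (simp add: flip_def ae_sym)
next
  case False
  then have "nat (1 - n) = Suc (nat (- n))" by simp
  then have "vpow (n - 1) = (v, False) # vpow n" using False by (simp add: vpow_def)
  then show ?thesis using sw_vpow[where z=z and n="n - 1"] by (simp add: ae_refl)
qed

lemma vpow_add: "RS z (vpow a @ vpow b) (vpow (a + b))"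
proof (induction a rule: int_induct[of _ 0])
  case base then show ?case using sw_vpow by (simp add: ae_refl)
next
  case (step1 i)
  have "RS z (vpow (i + 1) @ vpow b) (((v, True) # vpow i) @ vpow b)"
    by (rule ae_app_r[OF vpow_succ sw_vpow])
  moreover have "RS z ([(v, True)] @ (vpow i @ vpow b)) ([(v, True)] @ vpow (i + b))"
    by (rule ae_app_l[OF step1(2)]) (use v_side in auto)
  moreover have "RS z ((v, True) # vpow (i + b)) (vpow (i + 1 + b))"
    using vpow_succ[of z "i + b"] by (simp add: ae_sym algebra_simps)
  ultimately show ?case by (auto intro: ae_trans)
next
  case (step2 i)
  have "RS z (vpow (i - 1) @ vpow b) (((v, False) # vpow i) @ vpow b)"
    by (rule ae_app_r[OF vpow_pred sw_vpow])
  moreover have "RS z ([(v, False)] @ (vpow i @ vpow b)) ([(v, False)] @ vpow (i + b))"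
    by (rule ae_app_l[OF step2(2)]) (use v_side in auto)
  moreover have "RS z ((v, False) # vpow (i + b)) (vpow (i - 1 + b))"
    using vpow_pred[of z "i + b"] by (simp add: ae_sym algebra_simps)
  ultimately show ?case by (auto intro: ae_trans)
qed

lemma vpow_inj: "artin_eq S F m (vpow a) (vpow b) \<Longrightarrow> a = b"
  using ae_es es_vpow by metis

definition cS :: "bool \<Rightarrow> 'v word \<Rightarrow> 'v word \<Rightarrow> bool" where
  "cS z g g' \<longleftrightarrow> sw z g \<and> sw z g' \<and> (\<exists>n. RS z g (vpow n @ g'))"

lemma cS_refl: assumes "sw z g" shows "cS z g g"
proof -
  have "RS z g (vpow 0 @ g)" using assms by (simp add: ae_refl)
  then show ?thesis using assms unfolding cS_def by blast
qed

lemma cS_sym: assumes "cS z g g'" shows "cS z g' g"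
proof -
  obtain n where n: "RS z g (vpow n @ g')" and w: "sw z g" "sw z g'" using assms by (auto simp: cS_def)
  have a: "RS z (vpow (- n) @ g) (vpow (- n) @ (vpow n @ g'))" using ae_app_l[OF n sw_vpow] .
  have b: "RS z ((vpow (- n) @ vpow n) @ g') (vpow (-n + n) @ g')"
    by (rule ae_app_r[OF vpow_add w(2)])
  have "RS z (vpow (- n) @ g) g'" using ae_trans[OF a] b by simp
  then have "RS z g' (vpow (- n) @ g)" by (rule ae_sym)
  then show ?thesis using w by (auto simp: cS_def)
qed

lemma cS_trans: assumes "cS z g g'" "cS z g' g''" shows "cS z g g''"
proof -
  obtain n where n: "RS z g (vpow n @ g')" and w: "sw z g" "sw z g'" using assms by (auto simp: cS_def)
  obtain n' where n': "RS z g' (vpow n' @ g'')" and w': "sw z g''" using assms by (auto simp: cS_def)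
  have "RS z (vpow n @ g') (vpow n @ (vpow n' @ g''))" using ae_app_l[OF n' sw_vpow] .
  moreover have "RS z ((vpow n @ vpow n') @ g'') (vpow (n + n') @ g'')"
    by (rule ae_app_r[OF vpow_add w'])
  ultimately have "RS z g (vpow (n + n') @ g'')" using n by (auto intro: ae_trans)
  then show ?thesis using w w' by (auto simp: cS_def)
qed

lemma RS_cS: assumes "RS z g g'" shows "cS z g g'"
proof -
  have "RS z g (vpow 0 @ g')" using assms by simp
  then show ?thesis using ae_wf[OF assms] unfolding cS_def by blast
qed

lemma cS_vpow: assumes "sw z t" shows "cS z (vpow n @ t) t"
proof -
  have w: "sw z (vpow n @ t)" using assms sw_vpow[where z=z and n=n] by auto
  then have "RS z (vpow n @ t) (vpow n @ t)" by (rule ae_refl)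
  then show ?thesis using w assms unfolding cS_def by blast
qed

definition trS :: "bool \<Rightarrow> 'v word \<Rightarrow> 'v word" where
  "trS z g = (SOME g'. cS z g g' \<and> (cS z g [] \<longrightarrow> g' = []))"

definition nS :: "bool \<Rightarrow> 'v word \<Rightarrow> int" where
  "nS z g = (THE n. RS z g (vpow n @ trS z g))"

lemma tr_spec: assumes "sw z g" shows "cS z g (trS z g) \<and> (cS z g [] \<longrightarrow> trS z g = [])"
proof -
  have "\<exists>g'. cS z g g' \<and> (cS z g [] \<longrightarrow> g' = [])"
  proof (cases "cS z g []")
    case True then show ?thesis by blast
  next
    case False then show ?thesis using cS_refl[OF assms] by blast
  qed
  then show ?thesis unfolding trS_def by (rule someI_ex)
qed

lemma tr_cong: assumes "cS z g g'" shows "trS z g = trS z g'"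
proof -
  have "\<And>x. cS z g x \<longleftrightarrow> cS z g' x" using assms cS_sym cS_trans by blast
  then show ?thesis unfolding trS_def by simp
qed

lemma tr_sw: "sw z g \<Longrightarrow> sw z (trS z g)"
  using tr_spec unfolding cS_def by blast

lemma tr_idem: "sw z g \<Longrightarrow> trS z (trS z g) = trS z g"
  using tr_spec tr_cong by metis

lemma tr_Nil_iff: "sw z g \<Longrightarrow> trS z g = [] \<longleftrightarrow> cS z g []"
  using tr_spec by metis

lemma n_ex: assumes "sw z g" shows "RS z g (vpow (nS z g) @ trS z g)"
proof -
  obtain n where n: "RS z g (vpow n @ trS z g)" using tr_spec[OF assms] by (auto simp: cS_def)
  have "\<And>n'. RS z g (vpow n' @ trS z g) \<Longrightarrow> n' = n"
  proof -
    fix n' assume "RS z g (vpow n' @ trS z g)"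
    then have "RS z (vpow n' @ trS z g) (vpow n @ trS z g)" using n by (meson ae_sym ae_trans)
    then show "n' = n" using ae_cancel_r vpow_inj by metis
  qed
  then have "nS z g = n" unfolding nS_def using n by (rule the_equality[rotated])
  then show ?thesis using n by simp
qed

lemma n_unique: assumes "RS z g (vpow n @ trS z g)" shows "nS z g = n"
proof -
  have sg: "sw z g" using ae_wf[OF assms] by auto
  have "RS z (vpow n @ trS z g) (vpow (nS z g) @ trS z g)" using n_ex[OF sg] assms by (meson ae_sym ae_trans)
  then show ?thesis using ae_cancel_r vpow_inj by metis
qed

lemma RS_tr_n: assumes "RS z g g'" shows "trS z g = trS z g'" "nS z g = nS z g'"
proof -
  show t: "trS z g = trS z g'" using tr_cong[OF RS_cS[OF assms]] .
  have sg': "sw z g'" using ae_wf[OF assms] by auto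
  have "RS z g (vpow (nS z g') @ trS z g)" using assms n_ex[OF sg'] t by (auto intro: ae_trans)
  then show "nS z g = nS z g'" by (rule n_unique)
qed

end


context amalg begin

definition first_z :: "bool \<Rightarrow> (bool \<times> 'v word) list \<Rightarrow> 'v word \<times> (bool \<times> 'v word) list" where
  "first_z z L = (case L of [] \<Rightarrow> ([], []) | p # L' \<Rightarrow> if fst p = z then (snd p, L') else ([], L))"

definition notfirst :: "bool \<Rightarrow> (bool \<times> 'v word) list \<Rightarrow> bool" where
  "notfirst z L \<longleftrightarrow> (\<forall>q L'. L = q # L' \<longrightarrow> fst q \<noteq> z)"

definition entry :: "bool \<Rightarrow> 'v word \<Rightarrow> bool" where
  "entry z t \<longleftrightarrow> sw z t \<and> t \<noteq> [] \<and> trS z t = t"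

fun validL :: "(bool \<times> 'v word) list \<Rightarrow> bool" where
  "validL [] = True"
| "validL (p # L) = (entry (fst p) (snd p) \<and> validL L \<and> notfirst (fst p) L)"

definition hh :: "bool \<Rightarrow> 'v word \<Rightarrow> int \<times> (bool \<times> 'v word) list \<Rightarrow> 'v word" where
  "hh z g w = g @ vpow (fst w) @ fst (first_z z (snd w))"

definition actS :: "bool \<Rightarrow> 'v word \<Rightarrow> int \<times> (bool \<times> 'v word) list \<Rightarrow> int \<times> (bool \<times> 'v word) list" where
  "actS z g w = (nS z (hh z g w),
     if trS z (hh z g w) = [] then snd (first_z z (snd w)) else (z, trS z (hh z g w)) # snd (first_z z (snd w)))"

definition evl :: "int \<times> (bool \<times> 'v word) list \<Rightarrow> 'v word" where
  "evl w = vpow (fst w) @ concat (map snd (snd w))"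

lemma first_z_props:
  assumes "validL L"
  shows "validL (snd (first_z z L))" "notfirst z (snd (first_z z L))"
    "fst (first_z z L) = [] \<or> entry z (fst (first_z z L))"
    "concat (map snd L) = fst (first_z z L) @ concat (map snd (snd (first_z z L)))"
    "fst (first_z z L) = [] \<Longrightarrow> snd (first_z z L) = L"
    "fst (first_z z L) \<noteq> [] \<Longrightarrow> L = (z, fst (first_z z L)) # snd (first_z z L)"
  using assms by (auto simp: first_z_def notfirst_def entry_def split: list.splits)

lemma first_z_nf: "notfirst z L \<Longrightarrow> first_z z L = ([], L)"
  by (cases L) (simp_all add: first_z_def notfirst_def)

lemma validL_sw: "validL L \<Longrightarrow> set (concat (map snd L)) \<subseteq> VV \<times> UNIV"
proof (induction L)
  case Nil then show ?case by simp
next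
  case (Cons p L)
  then have "sw (fst p) (snd p)" by (simp add: entry_def)
  then have "set (snd p) \<subseteq> VV \<times> UNIV" by (rule sw_VV)
  then show ?case using Cons by simp
qed

lemma validL_sw_fz: assumes "validL L" shows "sw z (fst (first_z z L))"
  using first_z_props(3)[OF assms, of z] by (auto simp: entry_def)

lemma hh_sw: "sw z g \<Longrightarrow> validL (snd w) \<Longrightarrow> sw z (hh z g w)"
proof -
  assume a: "sw z g" "validL (snd w)"
  have "sw z (fst (first_z z (snd w)))" using validL_sw_fz[OF a(2)] .
  moreover have "sw z (vpow (fst w))" by (rule sw_vpow)
  ultimately show ?thesis unfolding hh_def using a(1) by simp
qed

lemma actS_valid:
  assumes g: "sw z g" and w: "validL (snd w)"
  shows "validL (snd (actS z g w))"
proof -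
  have s: "sw z (hh z g w)" using hh_sw[OF g w] .
  show ?thesis
  proof (cases "trS z (hh z g w) = []")
    case True then show ?thesis using first_z_props[OF w] by (simp add: actS_def)
  next
    case False
    have "entry z (trS z (hh z g w))" using False tr_sw[OF s] tr_idem[OF s] by (simp add: entry_def)
    then show ?thesis using False first_z_props[OF w, of z] by (simp add: actS_def)
  qed
qed

lemma actS_comp:
  assumes g1: "sw z g1" and g2: "sw z g2" and w: "validL (snd w)"
  shows "actS z g1 (actS z g2 w) = actS z (g1 @ g2) w"
proof -
  let ?h2 = "hh z g2 w"
  have s2: "sw z ?h2" using hh_sw[OF g2 w] .
  have fz: "first_z z (snd (actS z g2 w)) = (trS z ?h2, snd (first_z z (snd w)))"
  proof (cases "trS z ?h2 = []")
    case True then show ?thesis using first_z_nf first_z_props(2)[OF w] by (simp add: actS_def)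
  next
    case False then show ?thesis by (simp add: actS_def first_z_def)
  qed
  have "hh z g1 (actS z g2 w) = g1 @ vpow (nS z ?h2) @ trS z ?h2"
    unfolding hh_def[of z g1] fz by (simp add: actS_def hh_def)
  moreover have "RS z (g1 @ (vpow (nS z ?h2) @ trS z ?h2)) (g1 @ ?h2)"
    using ae_app_l[OF ae_sym[OF n_ex[OF s2]] g1] .
  moreover have "g1 @ ?h2 = hh z (g1 @ g2) w" by (simp add: hh_def)
  ultimately have e: "RS z (hh z g1 (actS z g2 w)) (hh z (g1 @ g2) w)" by simp
  show ?thesis unfolding actS_def[of z g1] using RS_tr_n[OF e] fz by (simp add: actS_def[of z "g1 @ g2"])
qed

lemma actS_Nil:
  assumes w: "validL (snd w)"
  shows "actS z [] w = w"
proof -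
  let ?t = "fst (first_z z (snd w))"
  have st: "sw z ?t" using validL_sw_fz[OF w] .
  have c: "cS z (hh z [] w) ?t" unfolding hh_def using cS_vpow[OF st] by simp
  have tr: "trS z (hh z [] w) = ?t"
  proof (cases "?t = []")
    case True
    have "cS z [] []" by (rule cS_refl) simp
    then have "trS z [] = []" using tr_spec[where z=z and g="[]"] by auto
    then show ?thesis using tr_cong[OF c] True by simp
  next
    case False
    then have "trS z ?t = ?t" using first_z_props(3)[OF w, of z] by (auto simp: entry_def)
    then show ?thesis using tr_cong[OF c] by simp
  qed
  have n: "nS z (hh z [] w) = fst w"
    apply (rule n_unique) unfolding tr unfolding hh_def using sw_vpow[where z=z and n="fst w"] st by (simp add: ae_refl)
  show ?thesis
  proof (cases "?t = []")
    case True then show ?thesis using first_z_props(5)[OF w, of z] tr n by (cases w) (simp add: actS_def)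
  next
    case False then show ?thesis using first_z_props(6)[OF w, of z] tr n by (cases w) (simp add: actS_def)
  qed
qed

lemma actS_cong:
  assumes e: "RS z g g'" and w: "validL (snd w)"
  shows "actS z g w = actS z g' w"
proof -
  have "RS z (hh z g w) (hh z g' w)" unfolding hh_def
    using ae_app_r[OF e] validL_sw_fz[OF w] sw_vpow[where z=z] by auto
  from RS_tr_n[OF this] show ?thesis by (simp add: actS_def)
qed

end


context amalg begin

lemma cS_Nil_iff: "cS z h [] \<longleftrightarrow> sw z h \<and> (\<exists>j. RS z h (vpow j))"
  unfolding cS_def by simp

lemma cS_winv: assumes "cS z (winv t) []" shows "cS z t []"
proof -
  obtain j where j: "RS z (winv t) (vpow j)" and s: "sw z (winv t)" using assms cS_Nil_iff by blast
  have "RS z t (vpow (- j))" using ae_winv[OF j] by (simp add: winv_vpow)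
  then show ?thesis using s cS_Nil_iff set_winv by metis
qed

lemma cS_app_vpow: assumes "cS z (g @ vpow n) []" shows "cS z g []"
proof -
  obtain j where j: "RS z (g @ vpow n) (vpow j)" and s: "sw z (g @ vpow n)" using assms cS_Nil_iff by blast
  have sg: "sw z g" using s by simp
  have a: "RS z ((g @ vpow n) @ vpow (- n)) (vpow j @ vpow (- n))" using ae_app_r[OF j sw_vpow] .
  have b: "RS z (g @ (vpow n @ vpow (- n))) (g @ vpow (n + - n))" using ae_app_l[OF vpow_add sg] .
  have c: "RS z (vpow j @ vpow (- n)) (vpow (j + - n))" by (rule vpow_add)
  have "RS z g (vpow (j + - n))" using ae_trans[OF ae_sym[OF b[simplified]] ae_trans[OF a[simplified] c]] by simp
  then show ?thesis using sg cS_Nil_iff by blast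
qed

lemma actS_v:
  assumes w: "validL (snd w)"
  shows "actS z [(v, b)] w = (fst w + (if b then 1 else -1), snd w)"
proof -
  let ?n = "fst w + (if b then 1 else -1)"
  have st: "sw z (fst (first_z z (snd w)))" using validL_sw_fz[OF w] .
  have e: "RS z ([(v, b)] @ vpow (fst w)) (vpow ?n)"
  proof (cases b)
    case True then show ?thesis using ae_sym[OF vpow_succ[where z=z and n="fst w"]] by simp
  next
    case False then show ?thesis using ae_sym[OF vpow_pred[where z=z and n="fst w"]] by simp
  qed
  have "RS z (hh z [(v, b)] w) (hh z [] (?n, snd w))"
    unfolding hh_def using ae_app_r[OF e st] by simp
  then have "actS z [(v, b)] w = actS z [] (?n, snd w)"
    unfolding actS_def using RS_tr_n by (simp add: hh_def)
  also have "\<dots> = (?n, snd w)" using actS_Nil[of "(?n, snd w)"] w by simp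
  finally show ?thesis .
qed

lemma actS_eval:
  assumes g: "sw z g" and w: "validL (snd w)"
  shows "R (g @ evl w) (evl (actS z g w))"
proof -
  let ?h = "hh z g w" and ?L = "snd (first_z z (snd w))"
  have sh: "sw z ?h" using hh_sw[OF g w] .
  have wL: "set (concat (map snd ?L)) \<subseteq> VV \<times> UNIV" using validL_sw first_z_props(1)[OF w] by blast
  have e1: "g @ evl w = ?h @ concat (map snd ?L)"
    unfolding evl_def hh_def using first_z_props(4)[OF w, of z] by simp
  have e2: "evl (actS z g w) = (vpow (nS z ?h) @ trS z ?h) @ concat (map snd ?L)"
    unfolding evl_def actS_def by auto
  have "R ?h (vpow (nS z ?h) @ trS z ?h)" using RS_R[OF n_ex[OF sh]] .
  from ae_app_r[OF this wL] show ?thesis unfolding e1 e2 .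
qed

lemma actS_prepend:
  assumes g: "sw z g" and nc: "\<not> cS z g []" and w: "validL (snd w)" and nf: "notfirst z (snd w)"
  shows "\<exists>n' t'. actS z g w = (n', (z, t') # snd w)"
proof -
  have fz: "first_z z (snd w) = ([], snd w)" using first_z_nf[OF nf] .
  have h: "hh z g w = g @ vpow (fst w)" unfolding hh_def fz by simp
  have sh: "sw z (g @ vpow (fst w))" using g sw_vpow[where z=z] by simp
  have "\<not> cS z (g @ vpow (fst w)) []" using cS_app_vpow nc by blast
  then have "trS z (hh z g w) \<noteq> []" unfolding h using tr_Nil_iff[OF sh] by simp
  then show ?thesis unfolding actS_def fz by simp
qed

lemma actS_short: "sw z g \<Longrightarrow> snd (actS z g (n, [])) = [] \<or> (\<exists>t. snd (actS z g (n, [])) = [(z, t)])"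
  by (simp add: actS_def first_z_def)

definition act_letter :: "'v letter \<Rightarrow> int \<times> (bool \<times> 'v word) list \<Rightarrow> int \<times> (bool \<times> 'v word) list" where
  "act_letter x w = actS (fst x \<in> X) [x] w"

definition act :: "'v word \<Rightarrow> int \<times> (bool \<times> 'v word) list \<Rightarrow> int \<times> (bool \<times> 'v word) list" where
  "act u w = foldr act_letter u w"

lemma act_Nil[simp]: "act [] w = w" by (simp add: act_def)
lemma act_Cons: "act (x # u) w = act_letter x (act u w)" by (simp add: act_def)
lemma act_append: "act (u @ u') w = act u (act u' w)" by (simp add: act_def)

lemma letter_side: "fst x \<in> VV \<Longrightarrow> sw (fst x \<in> X) [x]"
  using XY by (cases x) (auto simp: side_def)

lemma act_valid: "set u \<subseteq> VV \<times> UNIV \<Longrightarrow> validL (snd w) \<Longrightarrow> validL (snd (act u w))"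
proof (induction u)
  case Nil then show ?case by simp
next
  case (Cons x u)
  then have "validL (snd (act u w))" by simp
  moreover have "fst x \<in> VV" using Cons by auto
  ultimately show ?case unfolding act_Cons act_letter_def using actS_valid letter_side by blast
qed

lemma act_letter_side:
  assumes x: "sw z [x]" and w: "validL (snd w)"
  shows "act_letter x w = actS z [x] w"
proof (cases "(fst x \<in> X) = z")
  case True then show ?thesis by (simp add: act_letter_def)
next
  case False
  have "fst x \<in> side z" using x by auto
  then have "z = False" "fst x \<in> X" using False by (auto simp: side_def)
  then have "fst x = v" using XY \<open>fst x \<in> side z\<close> by (auto simp: side_def)
  then obtain b where xb: "x = (v, b)" by (cases x) auto
  show ?thesis unfolding act_letter_def xb using actS_v[OF w] by simp
qed

lemma act_side: "sw z g \<Longrightarrow> validL (snd w) \<Longrightarrow> act g w = actS z g w"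
proof (induction g)
  case Nil then show ?case by (simp add: actS_Nil)
next
  case (Cons x g)
  have sg: "sw z g" and sx: "sw z [x]" using Cons by auto
  have IH: "act g w = actS z g w" using Cons sg by simp
  have vv: "validL (snd (actS z g w))" using actS_valid[OF sg Cons(3)] .
  have "act (x # g) w = actS z [x] (actS z g w)" unfolding act_Cons IH using act_letter_side[OF sx vv] .
  also have "\<dots> = actS z ([x] @ g) w" using actS_comp[OF sx sg Cons(3)] .
  finally show ?case by simp
qed

lemma act_inv:
  assumes "R u u'"
  shows "validL (snd w) \<Longrightarrow> act u w = act u' w"
  using assms
proof (induction arbitrary: w rule: artin_eq.induct)
  case (refl w) then show ?case by simp
next
  case (sym u w) then show ?case by metis
next
  case (trans u v w) then show ?case by metis
next
  case (red u w' x)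
  let ?z = "fst x \<in> X"
  have sx: "sw ?z [x, flip x]" using letter_side[OF red(3)] by (cases x) (auto simp: flip_def)
  have vw: "validL (snd (act w' w))" using act_valid[OF red(2) red(4)] .
  have "RS ?z [x, flip x] []" using sx by (intro ae_red1) auto
  then have "act [x, flip x] (act w' w) = act w' w"
    using act_side[OF sx vw] actS_cong[OF _ vw] actS_Nil[OF vw] by metis
  then show ?case by (simp add: act_append del: append_Cons)
next
  case (braid u w' a b)
  have "(a \<in> side True \<and> b \<in> side True) \<or> (a \<in> side False \<and> b \<in> side False)"
    using edges[OF braid(5,3,4)] by (simp add: side_def)
  then obtain z where ab: "a \<in> side z" "b \<in> side z" by blast
  have s1: "sw z (alt_prod a b (m a b))" and s2: "sw z (alt_prod b a (m a b))" using ab by (auto simp: alt_prod_def)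
  have vw: "validL (snd (act w' w))" using act_valid[OF braid(2) braid(6)] .
  have "RS z ([] @ alt_prod a b (m a b) @ []) ([] @ alt_prod b a (m a b) @ [])"
    using ab braid(5) by (intro artin_eq.braid) (auto simp: Eres_def)
  then have "act (alt_prod a b (m a b)) (act w' w) = act (alt_prod b a (m a b)) (act w' w)"
    using act_side[OF s1 vw] act_side[OF s2 vw] actS_cong[OF _ vw] by simp
  then show ?case by (simp add: act_append)
qed

lemma evl_sw: "validL (snd w) \<Longrightarrow> set (evl w) \<subseteq> VV \<times> UNIV"
  unfolding evl_def using validL_sw sw_VV[OF sw_vpow] by auto

lemma act_eval: "set k \<subseteq> VV \<times> UNIV \<Longrightarrow> validL (snd w) \<Longrightarrow> R (k @ evl w) (evl (act k w))"
proof (induction k)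
  case Nil then show ?case using evl_sw by (simp add: ae_refl)
next
  case (Cons x k)
  have xv: "fst x \<in> VV" using Cons by auto
  have vw: "validL (snd (act k w))" using act_valid Cons by auto
  have a: "R ([x] @ (k @ evl w)) ([x] @ evl (act k w))" using Cons xv by (intro ae_app_l) auto
  have b: "R ([x] @ evl (act k w)) (evl (actS (fst x \<in> X) [x] (act k w)))"
    by (rule actS_eval[OF letter_side[OF xv] vw])
  show ?case using ae_trans[OF a b] by (simp add: act_Cons act_letter_def)
qed

lemma act_concat: "validL L \<Longrightarrow> act (concat (map snd L)) (0, []) = (0, L)"
proof (induction L)
  case Nil then show ?case by simp
next
  case (Cons p L)
  obtain z t where p: "p = (z, t)" by (cases p)
  have e: "entry z t" and vL: "validL L" and nf: "notfirst z L" using Cons p by auto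
  have st: "sw z t" using e by (simp add: entry_def)
  have IH: "act (concat (map snd L)) (0, []) = (0, L)" by (rule Cons.IH[OF vL])
  have "act (concat (map snd (p # L))) (0, []) = act t (act (concat (map snd L)) (0, []))"
    using p by (simp add: act_append)
  also have "\<dots> = act t (0, L)" unfolding IH ..
  also have "\<dots> = actS z t (0, L)" using act_side[OF st] vL by simp
  also have "\<dots> = (0, p # L)"
  proof -
    have fz: "first_z z L = ([], L)" using first_z_nf[OF nf] .
    have h: "hh z t (0, L) = t" by (simp add: hh_def fz)
    have tt: "trS z t = t" "t \<noteq> []" using e by (auto simp: entry_def)
    have "nS z t = 0" by (rule n_unique) (simp add: tt ae_refl st)
    then show ?thesis unfolding actS_def h using tt p fz by simp
  qed
  finally show ?case .
qed

lemma act_chain: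
  "validL M \<Longrightarrow> validL N \<Longrightarrow> (M \<noteq> [] \<longrightarrow> notfirst (fst (hd M)) N) \<Longrightarrow>
    \<exists>n' M'. act (winv (concat (map snd M))) (n, N) = (n', M' @ N)"
proof (induction M arbitrary: n N)
  case Nil then show ?case by simp
next
  case (Cons p M)
  obtain z t where p: "p = (z, t)" by (cases p)
  have e: "entry z t" and vM: "validL M" and nfM: "notfirst z M" using Cons(2) p by auto
  have st: "sw z (winv t)" using e by (simp add: entry_def set_winv)
  have nc: "\<not> cS z (winv t) []"
  proof
    assume "cS z (winv t) []"
    then have "cS z t []" by (rule cS_winv)
    moreover have "sw z t" "trS z t = t" "t \<noteq> []" using e by (auto simp: entry_def)
    ultimately show False using tr_Nil_iff[where z=z and g=t] by simp
  qed
  have nfN: "notfirst z N" using Cons(4) p by simp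
  obtain n1 t1 where a: "actS z (winv t) (n, N) = (n1, (z, t1) # N)"
    using actS_prepend[where w="(n, N)", OF st nc] Cons(3) nfN by fastforce
  have vN1: "validL ((z, t1) # N)" using actS_valid[OF st, of "(n, N)"] Cons(3) a by simp
  have "M \<noteq> [] \<longrightarrow> notfirst (fst (hd M)) ((z, t1) # N)" using nfM by (cases M) (auto simp: notfirst_def)
  then obtain n' M' where IH: "act (winv (concat (map snd M))) (n1, (z, t1) # N) = (n', M' @ ((z, t1) # N))"
    using Cons.IH[OF vM vN1] by blast
  have "act (winv (concat (map snd (p # M)))) (n, N) = act (winv (concat (map snd M))) (act (winv t) (n, N))"
    using p by (simp add: act_append)
  also have "act (winv t) (n, N) = (n1, (z, t1) # N)" using act_side[OF st] Cons(3) a by simp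
  finally show ?case using IH by (intro exI[of _ n'] exI[of _ "M' @ [(z, t1)]"]) simp
qed

end


lemma conj_move:
  assumes h: "artin_eq VV E m h (k @ w @ winv k)" and k: "set k \<subseteq> VV \<times> UNIV"
  shows "artin_eq VV E m (winv k @ h @ k) w"
proof -
  have ww: "set w \<subseteq> VV \<times> UNIV" using ae_wf[OF h] by auto
  have a: "artin_eq VV E m (winv k @ h @ k) (winv k @ (k @ w @ winv k) @ k)"
    using ae_app_l[OF ae_app_r[OF h k], of "winv k"] k by (simp add: set_winv)
  have b: "artin_eq VV E m ((winv k @ k) @ (w @ (winv k @ k))) ([] @ (w @ []))"
    by (intro ae_app ae_inv_l k ae_refl ww)
  show ?thesis using ae_trans[OF a] b by simp
qed

context amalg begin

lemma KL:
  assumes a: "a \<in> X" "b \<in> X" and ab: "\<not> R [(a, True)] [(b, True)]"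
    and k: "set k \<subseteq> VV \<times> UNIV"
    and hyp: "\<And>h. h \<in> {[(a, True)], [(b, True)]} \<Longrightarrow> \<exists>w. sw z' w \<and> R h (k @ w @ winv k)"
  shows "z' \<and> (\<exists>g. sw True g \<and> R k g)"
proof -
  obtain n L where nL: "act k (0, []) = (n, L)" by (cases "act k (0, [])")
  have vL: "validL L" using act_valid[OF k, of "(0, [])"] nL by simp
  have Rk: "R k (evl (n, L))" using act_eval[OF k, of "(0, [])"] nL by (simp add: evl_def)
  define t1 where "t1 = fst (first_z True L)"
  define L2 where "L2 = snd (first_z True L)"
  define g0 where "g0 = vpow n @ t1"
  define k2 where "k2 = concat (map snd L2)"
  have vL2: "validL L2" and nf2: "notfirst True L2" using first_z_props[OF vL] by (auto simp: L2_def)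
  have sg0: "sw True g0" unfolding g0_def t1_def using validL_sw_fz[OF vL] sw_vpow[where z=True] by simp
  have ev: "evl (n, L) = g0 @ k2" unfolding evl_def g0_def k2_def t1_def L2_def
    using first_z_props(4)[OF vL, of True] by simp
  have k2w: "set k2 \<subseteq> VV \<times> UNIV" unfolding k2_def using validL_sw[OF vL2] .
  have g0w: "set g0 \<subseteq> VV \<times> UNIV" using sw_VV[OF sg0] .
  define hp where "hp = (\<lambda>c. winv g0 @ [(c, True)] @ g0)"
  have swhp: "sw True (hp c)" if "c \<in> X" for c
    using sg0 that unfolding hp_def by (auto simp: set_winv side_def)
  have "\<exists>c \<in> {a, b}. \<not> cS True (hp c) []"
  proof (rule ccontr)
    assume "\<not> ?thesis"
    then have ca: "cS True (hp a) []" and cb: "cS True (hp b) []" by auto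
    obtain ja where ja: "RS True (hp a) (vpow ja)" using ca cS_Nil_iff by blast
    obtain jb where jb: "RS True (hp b) (vpow jb)" using cb cS_Nil_iff by blast
    have "es (hp a) = 1" "es (hp b) = 1" unfolding hp_def by simp_all
    then have "ja = 1" "jb = 1" using ae_es[OF ja] ae_es[OF jb] es_vpow by simp_all
    then have "RS True (hp a) (hp b)" using ja jb by (meson ae_sym ae_trans)
    then have "R (winv g0 @ ([(a, True)] @ g0)) (winv g0 @ ([(b, True)] @ g0))" unfolding hp_def using RS_R by simp
    then have "R [(a, True)] [(b, True)]" by (meson ae_cancel_l ae_cancel_r)
    then show False using ab by simp
  qed
  then obtain c where c: "c \<in> {a, b}" and nc: "\<not> cS True (hp c) []" by blast
  have cX: "c \<in> X" using c a by auto
  obtain w where sw': "sw z' w" and hw: "R [(c, True)] (k @ w @ winv k)" using hyp c by blast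
  have m1: "R (winv k @ [(c, True)] @ k) w" using conj_move[OF hw k] .
  have m2: "R (winv k @ [(c, True)] @ k) (winv (g0 @ k2) @ [(c, True)] @ (g0 @ k2))"
  proof -
    have Rk': "R k (g0 @ k2)" using Rk ev by simp
    have cc: "R [(c, True)] [(c, True)]" using cX XY by (intro ae_refl) auto
    show ?thesis using ae_app[OF ae_winv[OF Rk'] ae_app[OF cc Rk']] by simp
  qed
  have "winv (g0 @ k2) @ [(c, True)] @ (g0 @ k2) = winv k2 @ hp c @ k2" unfolding hp_def by simp
  then have m3: "R (winv k2 @ hp c @ k2) w" using m1 m2 by (metis ae_sym ae_trans)
  have "act (winv k2 @ hp c @ k2) (0, []) = act w (0, [])" using act_inv[OF m3] by simp
  moreover have "act w (0, []) = actS z' w (0, [])" using act_side[OF sw'] by simp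
  ultimately have eq: "act (winv k2 @ hp c @ k2) (0, []) = actS z' w (0, [])" by simp
  have "act k2 (0, []) = (0, L2)" unfolding k2_def by (rule act_concat[OF vL2])
  moreover have "act (hp c) (0, L2) = actS True (hp c) (0, L2)" using act_side[OF swhp[OF cX]] vL2 by simp
  moreover obtain n1 t' where p: "actS True (hp c) (0, L2) = (n1, (True, t') # L2)"
    using actS_prepend[where w="(0, L2)", OF swhp[OF cX] nc] vL2 nf2 by fastforce
  moreover have vN: "validL ((True, t') # L2)" using actS_valid[OF swhp[OF cX], of "(0, L2)"] vL2 p by simp
  moreover have "L2 \<noteq> [] \<longrightarrow> notfirst (fst (hd L2)) ((True, t') # L2)"
    using nf2 by (cases L2) (auto simp: notfirst_def)
  ultimately obtain n' M' where ch: "act (winv k2 @ hp c @ k2) (0, []) = (n', M' @ (True, t') # L2)"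
    using act_chain[OF vL2 vN, of n1] unfolding k2_def by (auto simp: act_append)
  have "snd (actS z' w (0, [])) = [] \<or> (\<exists>t. snd (actS z' w (0, [])) = [(z', t)])" by (rule actS_short[OF sw'])
  moreover have S: "snd (actS z' w (0, [])) = M' @ (True, t') # L2" using eq ch by (metis snd_conv)
  ultimately obtain t where "M' @ (True, t') # L2 = [(z', t)]" by auto
  then have "M' = [] \<and> L2 = [] \<and> z'" by (cases M') auto
  then have "k2 = []" "z'" unfolding k2_def by auto
  then show ?thesis using Rk ev sg0 by auto
qed

definition rho :: "'v letter \<Rightarrow> 'v letter" where
  "rho x = (if fst x \<in> X then x else (v, snd x))"

lemma rho_flip: "rho (flip x) = flip (rho x)" by (simp add: rho_def flip_def)

lemma map_rho_alt: "map rho (alt_prod a b n) = alt_prod (if a \<in> X then a else v) (if b \<in> X then b else v) n"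
  by (simp add: alt_prod_def rho_def)

lemma rho_id: "sw True u \<Longrightarrow> map rho u = u"
  by (induction u) (auto simp: rho_def side_def)

lemma rho_sw: "set u \<subseteq> VV \<times> UNIV \<Longrightarrow> sw True (map rho u)"
  using XY by (auto simp: rho_def side_def)

lemma retract0: "R u w \<Longrightarrow> RS True (map rho u) (map rho w)"
proof (induction rule: artin_eq.induct)
  case (refl w) then show ?case using rho_sw by (intro ae_refl) auto
next
  case (sym u w) show ?case using sym.IH by (rule ae_sym)
next
  case (trans u v w) show ?case using trans.IH by (rule ae_trans)
next
  case (red u w x)
  have "RS True (map rho u @ [rho x, flip (rho x)] @ map rho w) (map rho u @ map rho w)"
  proof -
    have "fst (rho x) \<in> side True" using red(3) XY by (auto simp: rho_def side_def)
    then show ?thesis using rho_sw[OF red(1)] rho_sw[OF red(2)] by (intro artin_eq.red) auto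
  qed
  then show ?case by (simp add: rho_flip)
next
  case (braid u w a b)
  show ?case
  proof (cases "a \<in> X \<and> b \<in> X")
    case True
    have "RS True (map rho u @ alt_prod a b (m a b) @ map rho w) (map rho u @ alt_prod b a (m a b) @ map rho w)"
      using rho_sw[OF braid(1)] rho_sw[OF braid(2)] True braid(5) by (intro artin_eq.braid) (auto simp: side_def Eres_def)
    then show ?thesis using True by (simp add: map_rho_alt)
  next
    case False
    then have "a \<in> Y" "b \<in> Y" using edges[OF braid(5,3,4)] by auto
    then have ra: "(if a \<in> X then a else v) = v" "(if b \<in> X then b else v) = v" using XY by auto
    have "RS True (map rho (u @ alt_prod a b (m a b) @ w)) (map rho (u @ alt_prod a b (m a b) @ w))"
    proof -
      have "set (u @ alt_prod a b (m a b) @ w) \<subseteq> VV \<times> UNIV" using braid by (auto simp: alt_prod_def)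
      from rho_sw[OF this] show ?thesis by (rule ae_refl)
    qed
    then show ?thesis by (simp add: map_rho_alt ra)
  qed
qed

lemma retract: "R u w \<Longrightarrow> sw True u \<Longrightarrow> sw True w \<Longrightarrow> RS True u w"
  using retract0 rho_id by metis

end


context amalg begin
lemma KL2:
  assumes a: "a \<in> X" "b \<in> X" and ab: "\<not> R [(a, True)] [(b, True)]"
    and k: "set k \<subseteq> VV \<times> UNIV" and L2: "L2 \<subseteq> X \<or> L2 \<subseteq> Y"
    and hyp: "\<And>h. h \<in> {[(a, True)], [(b, True)]} \<Longrightarrow> \<exists>w. set w \<subseteq> L2 \<times> UNIV \<and> R h (k @ w @ winv k)"
  shows "L2 \<subseteq> X \<and> (\<exists>g. set g \<subseteq> X \<times> UNIV \<and> R k g)"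
proof -
  let ?z = "L2 \<subseteq> X"
  have sz: "L2 \<subseteq> side ?z" using L2 unfolding side_def by (cases "L2 \<subseteq> X") simp_all
  have "\<exists>w. sw ?z w \<and> R h (k @ w @ winv k)" if hh: "h \<in> {[(a, True)], [(b, True)]}" for h
  proof -
    obtain w where w: "set w \<subseteq> L2 \<times> UNIV" "R h (k @ w @ winv k)" using hyp[OF hh] by blast
    have "sw ?z w" using w(1) sz by fastforce
    then show ?thesis using w(2) by blast
  qed
  from KL[OF a ab k this] show ?thesis by (simp add: side_def)
qed

lemma retractX: "R u w \<Longrightarrow> set u \<subseteq> X \<times> UNIV \<Longrightarrow> set w \<subseteq> X \<times> UNIV \<Longrightarrow> artin_eq X (Eres E X) m u w"
  using retract[of u w] by (simp add: side_def)
end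

abbreviation relS :: "('v \<Rightarrow> 'v \<Rightarrow> bool) \<Rightarrow> 'v set \<Rightarrow> ('v \<times> 'v) set" where
  "relS E S \<equiv> {(a, b). a \<in> S \<and> b \<in> S \<and> E a b}"

lemma relS_Eres: "S \<subseteq> X \<Longrightarrow> relS (Eres E X) S = relS E S"
  by (auto simp: Eres_def)

lemma connected_Eres: "S \<subseteq> X \<Longrightarrow> connected_on (Eres E X) S = connected_on E S"
  unfolding connected_on_def using relS_Eres[of S X E] by simp

lemma sep_Eres: "S \<subseteq> X \<Longrightarrow> separating_vertex (Eres E X) S u = separating_vertex E S u"
  unfolding separating_vertex_def using connected_Eres[of "S - {u}" X E] by auto

lemma chunk_Eres: assumes "X \<subseteq> VV" shows "chunk X (Eres E X) S \<longleftrightarrow> S \<subseteq> X \<and> chunk VV E S"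
proof (cases "S \<subseteq> X")
  case True
  then have "connected_on (Eres E X) S = connected_on E S" "\<And>u. separating_vertex (Eres E X) S u = separating_vertex E S u"
    using connected_Eres[OF True] sep_Eres[OF True] by auto
  then show ?thesis using True assms unfolding chunk_def by auto
next
  case False then show ?thesis unfolding chunk_def by simp
qed

lemma big_chunk_Eres: assumes XV: "X \<subseteq> VV" and b: "big_chunk VV E L" and LX: "L \<subseteq> X" shows "big_chunk X (Eres E X) L"
proof -
  have "chunk X (Eres E X) L" using chunk_Eres[OF XV] b LX by (simp add: big_chunk_def)
  moreover have "T = L" if "chunk X (Eres E X) T" "L \<subseteq> T" for T
  proof -
    have "chunk VV E T" using chunk_Eres[OF XV] that(1) by simp
    then show ?thesis using b that(2) unfolding big_chunk_def by simp
  qed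
  ultimately show ?thesis unfolding big_chunk_def by auto
qed

lemma chunk_two: assumes "chunk VV E S" shows "\<exists>a b. a \<in> S \<and> b \<in> S \<and> a \<noteq> b"
proof -
  obtain a where a: "a \<in> S" using assms by (auto simp: chunk_def connected_on_def)
  then have "connected_on E (S - {a})" using assms by (auto simp: chunk_def separating_vertex_def)
  then obtain b where "b \<in> S - {a}" by (auto simp: connected_on_def)
  then show ?thesis using a by blast
qed

lemma rtrancl_sym: assumes "\<And>a b. (a, b) \<in> r \<Longrightarrow> (b, a) \<in> r" and "(a, b) \<in> r\<^sup>*" shows "(b, a) \<in> r\<^sup>*"
  using assms(2) by (induction rule: rtrancl_induct) (auto intro: converse_rtrancl_into_rtrancl assms(1))

lemma lsg_Eres: "labelled_simplicial_graph VV E m \<Longrightarrow> labelled_simplicial_graph X (Eres E X) m"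
  unfolding labelled_simplicial_graph_def Eres_def by auto

lemma graph_split:
  assumes sym: "\<And>a b. E a b \<Longrightarrow> E b a"
    and conn: "connected_on E VV" and vV: "v \<in> VV"
    and nc: "\<not> connected_on E (VV - {v})" and ne: "VV - {v} \<noteq> {}"
  shows "\<exists>X Y. X \<union> Y = VV \<and> X \<inter> Y = {v} \<and> X \<noteq> VV \<and> Y \<noteq> VV \<and>
    (\<forall>a b. E a b \<longrightarrow> a \<in> VV \<longrightarrow> b \<in> VV \<longrightarrow> (a \<in> X \<and> b \<in> X) \<or> (a \<in> Y \<and> b \<in> Y)) \<and>
    connected_on E X \<and> connected_on E Y \<and> (\<forall>S. chunk VV E S \<longrightarrow> S \<subseteq> X \<or> S \<subseteq> Y)"
proof -
  let ?Rv = "relS E (VV - {v})"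
  obtain x y where x: "x \<in> VV - {v}" and y: "y \<in> VV - {v}" and xy: "(x, y) \<notin> ?Rv\<^sup>*"
    using nc ne unfolding connected_on_def by blast
  define C where "C = {z. (x, z) \<in> ?Rv\<^sup>*}"
  have CV: "C \<subseteq> VV - {v}"
  proof
    fix z assume "z \<in> C"
    then have "(x, z) \<in> ?Rv\<^sup>*" by (simp add: C_def)
    then show "z \<in> VV - {v}" using x by (induction rule: rtrancl_induct) auto
  qed
  have xC: "x \<in> C" by (simp add: C_def)
  have yC: "y \<notin> C" using xy by (simp add: C_def)
  have clos: "b \<in> C" if "a \<in> C" "b \<in> VV - {v}" "E a b" for a b
  proof -
    have "(a, b) \<in> ?Rv" using that CV by auto
    then show ?thesis using that(1) unfolding C_def by (auto intro: rtrancl_into_rtrancl)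
  qed
  define X where "X = insert v C"
  define Y where "Y = VV - C"
  have XY1: "X \<union> Y = VV" using CV vV by (auto simp: X_def Y_def)
  have XY2: "X \<inter> Y = {v}" using CV vV by (auto simp: X_def Y_def)
  have XV: "X \<noteq> VV" using y yC by (auto simp: X_def)
  have YV: "Y \<noteq> VV" using xC x by (auto simp: Y_def)
  have ed: "\<forall>a b. E a b \<longrightarrow> a \<in> VV \<longrightarrow> b \<in> VV \<longrightarrow> (a \<in> X \<and> b \<in> X) \<or> (a \<in> Y \<and> b \<in> Y)"
  proof (intro allI impI)
    fix a b assume e: "E a b" "a \<in> VV" "b \<in> VV"
    have 1: "a \<in> C \<Longrightarrow> b \<in> X" using clos[of a b] e by (auto simp: X_def)
    have 2: "b \<in> C \<Longrightarrow> a \<in> X" using clos[of b a] e sym by (auto simp: X_def)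
    show "(a \<in> X \<and> b \<in> X) \<or> (a \<in> Y \<and> b \<in> Y)"
      using 1 2 e by (auto simp: X_def Y_def)
  qed
  have symX: "\<And>p q. (p, q) \<in> relS E S \<Longrightarrow> (q, p) \<in> relS E S" for S using sym by auto
  have toX: "(p, v) \<in> (relS E X)\<^sup>*" if "p \<in> X" for p
  proof (cases "p = v")
    case True then show ?thesis by simp
  next
    case False
    then have pC: "p \<in> C" using that by (simp add: X_def)
    have "(p, v) \<in> (relS E VV)\<^sup>*" using conn pC CV vV unfolding connected_on_def by blast
    then have "p \<in> C \<longrightarrow> (p, v) \<in> (relS E X)\<^sup>*"
    proof (induction rule: converse_rtrancl_induct)
      case base then show ?case by simp
    next
      case (step p p')
      show ?case
      proof
        assume pC: "p \<in> C"
        have e: "E p p'" "p' \<in> VV" using step by auto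
        show "(p, v) \<in> (relS E X)\<^sup>*"
        proof (cases "p' = v")
          case True
          then have "(p, v) \<in> relS E X" using e pC by (auto simp: X_def)
          then show ?thesis by auto
        next
          case False
          then have "p' \<in> C" using clos[OF pC _ e(1)] e by auto
          then have "(p', v) \<in> (relS E X)\<^sup>*" using step by auto
          moreover have "(p, p') \<in> relS E X" using e pC \<open>p' \<in> C\<close> by (auto simp: X_def)
          ultimately show ?thesis by (auto intro: converse_rtrancl_into_rtrancl)
        qed
      qed
    qed
    then show ?thesis using pC by simp
  qed
  have toY: "(p, v) \<in> (relS E Y)\<^sup>*" if "p \<in> Y" for p
  proof -
    have "(p, v) \<in> (relS E VV)\<^sup>*" using conn that vV unfolding connected_on_def Y_def by blast
    then have "p \<in> Y \<longrightarrow> (p, v) \<in> (relS E Y)\<^sup>*"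
    proof (induction rule: converse_rtrancl_induct)
      case base then show ?case by simp
    next
      case (step p p')
      show ?case
      proof
        assume pY: "p \<in> Y"
        have e: "E p p'" "p' \<in> VV" "p \<in> VV" using step by auto
        show "(p, v) \<in> (relS E Y)\<^sup>*"
        proof (cases "p = v")
          case True then show ?thesis by simp
        next
          case False
          have "p' \<notin> C"
          proof
            assume "p' \<in> C"
            then have "p \<in> C" using clos[of p' p] e sym False by auto
            then show False using pY by (simp add: Y_def)
          qed
          then have p'Y: "p' \<in> Y" using e by (simp add: Y_def)
          then have "(p', v) \<in> (relS E Y)\<^sup>*" using step by auto
          moreover have "(p, p') \<in> relS E Y" using e pY p'Y by auto
          ultimately show ?thesis by (auto intro: converse_rtrancl_into_rtrancl)
        qed
      qed
    qed
    then show ?thesis using that by simp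
  qed
  have cX: "connected_on E X"
    unfolding connected_on_def
  proof (intro conjI ballI)
    show "X \<noteq> {}" by (simp add: X_def)
    fix p q assume "p \<in> X" "q \<in> X"
    then show "(p, q) \<in> (relS E X)\<^sup>*" using toX rtrancl_sym[OF symX] by (meson rtrancl_trans)
  qed
  have cY: "connected_on E Y"
    unfolding connected_on_def
  proof (intro conjI ballI)
    show "Y \<noteq> {}" using XY2 by auto
    fix p q assume "p \<in> Y" "q \<in> Y"
    then show "(p, q) \<in> (relS E Y)\<^sup>*" using toY rtrancl_sym[OF symX] by (meson rtrancl_trans)
  qed
  have ch: "S \<subseteq> X \<or> S \<subseteq> Y" if S: "chunk VV E S" for S
  proof (rule ccontr)
    assume "\<not> ?thesis"
    then obtain p q where p: "p \<in> S" "p \<notin> X" and q: "q \<in> S" "q \<notin> Y" by auto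
    have SV: "S \<subseteq> VV" using S by (simp add: chunk_def)
    have qC: "q \<in> C" using q SV by (auto simp: Y_def)
    have pC: "p \<notin> C" "p \<noteq> v" using p by (auto simp: X_def)
    have "connected_on E (S - {v})"
    proof (cases "v \<in> S")
      case True then show ?thesis using S by (auto simp: chunk_def separating_vertex_def)
    next
      case False then show ?thesis using S by (simp add: chunk_def)
    qed
    moreover have "q \<noteq> v" using qC CV by auto
    ultimately have "(q, p) \<in> (relS E (S - {v}))\<^sup>*" using p q pC unfolding connected_on_def by blast
    moreover have "relS E (S - {v}) \<subseteq> ?Rv" using SV by auto
    ultimately have "(q, p) \<in> ?Rv\<^sup>*" using rtrancl_mono by blast
    then have "p \<in> C" using qC unfolding C_def by (auto intro: rtrancl_trans)
    then show False using pC by simp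
  qed
  show ?thesis using XY1 XY2 XV YV ed cX cY ch by blast
qed



lemma main_ind:
  "card VV = N \<Longrightarrow> labelled_simplicial_graph VV E m \<Longrightarrow> finite VV \<Longrightarrow> connected_on E VV \<Longrightarrow>
   big_chunk VV E L1 \<Longrightarrow> big_chunk VV E L2 \<Longrightarrow> set k \<subseteq> VV \<times> UNIV \<Longrightarrow>
   (\<forall>h. set h \<subseteq> L1 \<times> UNIV \<longrightarrow> (\<exists>w. set w \<subseteq> L2 \<times> UNIV \<and> artin_eq VV E m h (k @ w @ winv k))) \<Longrightarrow>
   L1 = L2 \<and> (\<exists>w. set w \<subseteq> L1 \<times> UNIV \<and> artin_eq VV E m k w)"
proof (induction N arbitrary: VV E L1 L2 k rule: less_induct)
  case (less N)
  note lsg = less.prems(2) and fin = less.prems(3) and conn = less.prems(4)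
    and b1 = less.prems(5) and b2 = less.prems(6) and kw = less.prems(7) and hyp = less.prems(8)
  have c1: "chunk VV E L1" and c2: "chunk VV E L2" using b1 b2 by (auto simp: big_chunk_def)
  have L1V: "L1 \<subseteq> VV" and L2V: "L2 \<subseteq> VV" using c1 c2 by (auto simp: chunk_def)
  have sym: "\<And>a b. E a b \<Longrightarrow> E b a" and Ein: "\<And>a b. E a b \<Longrightarrow> a \<in> VV \<and> b \<in> VV"
    using lsg by (auto simp: labelled_simplicial_graph_def)
  obtain a b where ab: "a \<in> L1" "b \<in> L1" "a \<noteq> b" using chunk_two[OF c1] by blast
  show ?case
  proof (cases "\<exists>u \<in> VV. separating_vertex E VV u")
    case False
    have cV: "chunk VV E VV" using False conn unfolding chunk_def by blast
    have "L1 = VV" using b1 cV L1V unfolding big_chunk_def by blast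
    moreover have "L2 = VV" using b2 cV L2V unfolding big_chunk_def by blast
    moreover have "artin_eq VV E m k k" using kw by (rule ae_refl)
    ultimately show ?thesis using kw by blast
  next
    case True
    then obtain v where vV: "v \<in> VV" and nc: "\<not> connected_on E (VV - {v})"
      unfolding separating_vertex_def by blast
    have ne: "VV - {v} \<noteq> {}" using ab L1V by auto
    obtain X Y where XY: "X \<union> Y = VV" "X \<inter> Y = {v}" "X \<noteq> VV" "Y \<noteq> VV"
      and ed: "\<forall>a b. E a b \<longrightarrow> a \<in> VV \<longrightarrow> b \<in> VV \<longrightarrow> (a \<in> X \<and> b \<in> X) \<or> (a \<in> Y \<and> b \<in> Y)"
      and cX: "connected_on E X" and cY: "connected_on E Y"
      and ch: "\<forall>S. chunk VV E S \<longrightarrow> S \<subseteq> X \<or> S \<subseteq> Y"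
      using graph_split[OF sym conn vV nc ne] by metis
    have am1: "amalg VV E X Y v" using XY ed by unfold_locales auto
    have am2: "amalg VV E Y X v" using XY ed by unfold_locales auto
    have ndist: "\<not> artin_eq VV E m [(a, True)] [(b, True)]" using gens_distinct[OF lsg ab(3)] .
    have hyp2: "\<And>h. h \<in> {[(a, True)], [(b, True)]} \<Longrightarrow> \<exists>w. set w \<subseteq> L2 \<times> UNIV \<and> artin_eq VV E m h (k @ w @ winv k)"
      using hyp ab by auto
    obtain S T where am: "amalg VV E S T v" and SV: "S \<noteq> VV" and cS: "connected_on E S" and L1S: "L1 \<subseteq> S"
      and L2ST: "L2 \<subseteq> S \<or> L2 \<subseteq> T"
    proof -
      have o1: "L1 \<subseteq> X \<or> L1 \<subseteq> Y" and o2: "L2 \<subseteq> X \<or> L2 \<subseteq> Y" using ch c1 c2 by auto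
      show ?thesis
      proof (cases "L1 \<subseteq> X")
        case True then show ?thesis using that[OF am1 XY(3) cX True] o2 by blast
      next
        case False then show ?thesis using that[OF am2 XY(4) cY] o1 o2 by blast
      qed
    qed
    have SsV: "S \<subseteq> VV" using am unfolding amalg_def by blast
    have abS: "a \<in> S" "b \<in> S" using ab L1S by auto
    obtain g where L2S: "L2 \<subseteq> S" and gS: "set g \<subseteq> S \<times> UNIV" and kg: "artin_eq VV E m k g"
      using amalg.KL2[OF am abS ndist kw L2ST hyp2] by blast
    have "S \<subset> VV" using SsV SV by blast
    then have card: "card S < N" using fin less.prems(1) psubset_card_mono by blast
    have hypS: "\<forall>h. set h \<subseteq> L1 \<times> UNIV \<longrightarrow> (\<exists>w. set w \<subseteq> L2 \<times> UNIV \<and> artin_eq S (Eres E S) m h (g @ w @ winv g))"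
    proof (intro allI impI)
      fix h assume h: "set h \<subseteq> L1 \<times> (UNIV :: bool set)"
      obtain w where w: "set w \<subseteq> L2 \<times> UNIV" "artin_eq VV E m h (k @ w @ winv k)" using hyp h by blast
      have ww: "set w \<subseteq> VV \<times> UNIV" using w(1) L2V by auto
      have "artin_eq VV E m (k @ w @ winv k) (g @ w @ winv g)"
        using ae_app[OF kg ae_app[OF ae_refl[OF ww] ae_winv[OF kg]]] .
      then have "artin_eq VV E m h (g @ w @ winv g)" using w(2) by (rule ae_trans[rotated])
      moreover have "set h \<subseteq> S \<times> UNIV" using h L1S by auto
      moreover have "set (g @ w @ winv g) \<subseteq> S \<times> UNIV" using gS w(1) L2S by (auto simp: set_winv)
      ultimately have "artin_eq S (Eres E S) m h (g @ w @ winv g)" by (rule amalg.retractX[OF am])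
      then show "\<exists>w. set w \<subseteq> L2 \<times> UNIV \<and> artin_eq S (Eres E S) m h (g @ w @ winv g)" using w(1) by blast
    qed
    have IH: "L1 = L2 \<and> (\<exists>w. set w \<subseteq> L1 \<times> UNIV \<and> artin_eq S (Eres E S) m g w)"
      using less.IH[OF card HOL.refl lsg_Eres[OF lsg] finite_subset[OF SsV fin] connected_Eres[THEN iffD2, OF subset_refl cS]
        big_chunk_Eres[OF SsV b1 L1S] big_chunk_Eres[OF SsV b2 L2S] gS hypS] .
    then obtain w where w: "set w \<subseteq> L1 \<times> UNIV" "artin_eq S (Eres E S) m g w" by blast
    have "artin_eq VV E m g w" using w(2) SsV by (rule ae_mono) (auto simp: Eres_def)
    then show ?thesis using IH w(1) kg by (auto intro: ae_trans)
  qed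
qed

theorem lemma5p3:
  fixes VV :: "'v set" and E :: "'v \<Rightarrow> 'v \<Rightarrow> bool" and m :: "'v \<Rightarrow> 'v \<Rightarrow> nat"
    and L1 L2 :: "'v set" and k :: "'v word"
  assumes "labelled_simplicial_graph VV E m"
    and "finite VV" and "connected_on E VV" and "card VV \<ge> 3"
    and "big_chunk VV E L1" and "big_chunk VV E L2"
    and "set k \<subseteq> VV \<times> UNIV"
    and "std_parabolic VV E m L1 \<subseteq> conj_parabolic VV E m k L2"
  shows "std_parabolic VV E m L1 = std_parabolic VV E m L2 \<and> artin_elem VV E m k \<in> std_parabolic VV E m L1"
proof -
  have L1V: "L1 \<subseteq> VV" using assms(5) by (auto simp: big_chunk_def chunk_def)
  have hyp: "\<forall>h. set h \<subseteq> L1 \<times> UNIV \<longrightarrow> (\<exists>w. set w \<subseteq> L2 \<times> UNIV \<and> artin_eq VV E m h (k @ w @ winv k))"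
  proof (intro allI impI)
    fix h :: "'v word" assume h: "set h \<subseteq> L1 \<times> UNIV"
    have "artin_elem VV E m h \<in> std_parabolic VV E m L1" using h unfolding std_parabolic_def by blast
    then have "artin_elem VV E m h \<in> conj_parabolic VV E m k L2" using assms(8) by blast
    then obtain w where w: "set w \<subseteq> L2 \<times> UNIV" "artin_elem VV E m h = artin_elem VV E m (k @ w @ winv k)"
      unfolding conj_parabolic_def by blast
    have "h \<in> artin_elem VV E m h" unfolding artin_elem_def using h L1V by (auto intro: ae_refl)
    then have "artin_eq VV E m (k @ w @ winv k) h" using w(2) unfolding artin_elem_def by simp
    then show "\<exists>w. set w \<subseteq> L2 \<times> UNIV \<and> artin_eq VV E m h (k @ w @ winv k)" using w(1) ae_sym by blast
  qed
  obtain w where L12: "L1 = L2" and w: "set w \<subseteq> L1 \<times> UNIV" "artin_eq VV E m k w"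
    using main_ind[OF HOL.refl assms(1,2,3,5,6,7) hyp] by blast
  have "artin_elem VV E m k = artin_elem VV E m w"
    unfolding artin_elem_def using w(2) by (auto intro: ae_trans ae_sym)
  then have "artin_elem VV E m k \<in> std_parabolic VV E m L1" using w(1) unfolding std_parabolic_def by blast
  then show ?thesis using L12 by simp
qed


end
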